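(* Let $n=2k+1$ be odd with $k\ge1$, $\theta=\frac{2\pi}{n+2}$, and for $L>0$ let $\mathcal{N}^{(L)}=\{(\ell_j,r_j): j\in[1:n]\}$ be given by $\ell_1=1$, $r_1=L$, and $$\ell_{2i}=\ell_{2i+1}=\frac{\sin(i\theta)+\sin((i+1)\theta)}{\sin((i+1)\theta)},\qquad r_{2i}=r_{2i+1}=\frac{\sin(i\theta)+\sin((i+1)\theta)}{\sin(i\theta)},\qquad i\in[1:k].$$ Then $\mathsf{C}_1(\mathcal{N}_j)=1$ for all $j\in[2:n]$, $\mathsf{C}_1(\mathcal{N}^{(L)})=1$ for every $L>0$, $\mathsf{C}_n(\mathcal{N}^{(L)})\le\ell_n=2+2\cos\theta$ for every $L>0$, and $\lim_{L\to\infty}\mathsf{C}_n(\mathcal{N}^{(L)})=2+2\cos\theta$. Hence $\lim_{L\to\infty}\frac{\mathsf{C}_1(\mathcal{N}^{(L)})}{\mathsf{C}_n(\mathcal{N}^{(L)})}=\frac{1}{2+2\cos\left(\frac{2\pi}{n+2}\right)}$.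
   Context: For a network $\mathcal{N}=\{(\ell_i,r_i): i\in[1:n]\}$ with nonnegative link capacities, with complements inside $[1:n]$ and maxima over empty sets equal to $0$, the approximate capacity is $\mathsf{C}_n(\mathcal{N})=\max_{\boldsymbol\lambda}\min_{\Omega\subseteq[1:n]}\sum_{\mathcal{S}\subseteq[1:n]}\lambda_{\mathcal{S}}\big(\max_{i\in\mathcal{S}^c\cap\Omega^c}\ell_i+\max_{i\in\mathcal{S}\cap\Omega}r_i\big)$, the maximum being over schedules $\boldsymbol\lambda=(\lambda_{\mathcal{S}})_{\mathcal{S}\subseteq[1:n]}$, $\lambda_{\mathcal{S}}\ge0$, $\sum_{\mathcal{S}}\lambda_{\mathcal{S}}=1$. $\mathsf{C}_1(\mathcal{N}_i)=\frac{\ell_ir_i}{\ell_i+r_i}$ and $\mathsf{C}_1(\mathcal{N})=\max_i\mathsf{C}_1(\mathcal{N}_i)$. *)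

theory Defs
  imports "HOL-Analysis.Analysis"
begin

text \<open>A network on [1:n] is given by link capacities l, r :: nat => real (indices 1..n).\<close>

definition maxOn :: "(nat \<Rightarrow> real) \<Rightarrow> nat set \<Rightarrow> real" where
  "maxOn f A = (if A = {} then 0 else Max (f ` A))"

definition schedule :: "nat \<Rightarrow> (nat set \<Rightarrow> real) \<Rightarrow> bool" where
  "schedule n lam \<longleftrightarrow> (\<forall>S\<in>Pow {1..n}. lam S \<ge> 0) \<and> (\<Sum>S\<in>Pow {1..n}. lam S) = 1"

definition cutValue :: "nat \<Rightarrow> (nat \<Rightarrow> real) \<Rightarrow> (nat \<Rightarrow> real) \<Rightarrow> (nat set \<Rightarrow> real) \<Rightarrow> real" where
  "cutValue n l r lam = Min ((\<lambda>\<Omega>. \<Sum>S\<in>Pow {1..n}. lam S *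
       (maxOn l (({1..n} - S) \<inter> ({1..n} - \<Omega>)) + maxOn r (S \<inter> \<Omega>))) ` Pow {1..n})"

text \<open>Approximate capacity C_n (the max over schedules, written as a supremum).\<close>
definition capN :: "nat \<Rightarrow> (nat \<Rightarrow> real) \<Rightarrow> (nat \<Rightarrow> real) \<Rightarrow> real" where
  "capN n l r = (SUP lam \<in> {lam. schedule n lam}. cutValue n l r lam)"

definition cap1Link :: "real \<Rightarrow> real \<Rightarrow> real" where
  "cap1Link a b = a * b / (a + b)"

definition cap1 :: "nat \<Rightarrow> (nat \<Rightarrow> real) \<Rightarrow> (nat \<Rightarrow> real) \<Rightarrow> real" where
  "cap1 n l r = Max ((\<lambda>i. cap1Link (l i) (r i)) ` {1..n})"

end

theory Submission
  imports Defs
begin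


lemma maxOn_ge: "finite A \<Longrightarrow> x \<in> A \<Longrightarrow> f x \<le> maxOn f A"
  unfolding maxOn_def by auto

lemma maxOn_nonneg: "finite A \<Longrightarrow> (\<forall>x\<in>A. 0 \<le> f x) \<Longrightarrow> 0 \<le> maxOn f A"
  unfolding maxOn_def by (auto simp: Max_ge_iff)

lemma maxOn_le: "finite A \<Longrightarrow> (\<forall>x\<in>A. f x \<le> c) \<Longrightarrow> 0 \<le> c \<Longrightarrow> maxOn f A \<le> c"
  unfolding maxOn_def by auto

lemma cutValue_le:
  assumes "schedule n lam" "\<forall>j\<in>{1..n}. l j \<le> c" "0 \<le> c"
  shows "cutValue n l r lam \<le> c"
proof -
  have "cutValue n l r lam \<le> (\<Sum>S\<in>Pow {1..n}. lam S *
       (maxOn l (({1..n} - S) \<inter> ({1..n} - {})) + maxOn r (S \<inter> {})))"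
    unfolding cutValue_def by (rule Min_le) (auto intro!: image_eqI[where x="{}"])
  also have "\<dots> \<le> (\<Sum>S\<in>Pow {1..n}. lam S * c)"
  proof (rule sum_mono)
    fix S assume "S \<in> Pow {1..n}"
    have "maxOn l (({1..n} - S) \<inter> ({1..n} - {})) \<le> c"
      by (rule maxOn_le) (use assms in auto)
    moreover have "maxOn r (S \<inter> {}) = 0" by (simp add: maxOn_def)
    moreover have "lam S \<ge> 0" using assms(1) \<open>S \<in> Pow {1..n}\<close> unfolding schedule_def by auto
    ultimately show "lam S * (maxOn l (({1..n} - S) \<inter> ({1..n} - {})) + maxOn r (S \<inter> {})) \<le> lam S * c"
      by (simp add: mult_left_mono)
  qed
  also have "\<dots> = c" using assms(1) unfolding schedule_def by (simp add: sum_distrib_right[symmetric])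
  finally show ?thesis .
qed

lemma cutValue_ge:
  assumes "\<And>\<Omega>. \<Omega> \<subseteq> {1..n} \<Longrightarrow> b \<le> (\<Sum>S\<in>Pow {1..n}. lam S *
       (maxOn l (({1..n} - S) \<inter> ({1..n} - \<Omega>)) + maxOn r (S \<inter> \<Omega>)))"
  shows "b \<le> cutValue n l r lam"
  unfolding cutValue_def using assms by (subst Min_ge_iff) auto



lemma lower_bound:
  fixes l r :: "nat \<Rightarrow> real" and Lf Rf :: "nat \<Rightarrow> real"
  assumes hn: "n = 2*k+1" and hk: "k \<ge> 1"
    and l1: "l 1 = Lf 0" and r1: "r 1 = L"
    and lr: "\<And>i. i \<in> {1..k} \<Longrightarrow> l (2*i) = Lf i \<and> l (2*i+1) = Lf i \<and> r (2*i) = Rf i \<and> r (2*i+1) = Rf i"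
    and pos: "\<And>j. j \<in> {1..n} \<Longrightarrow> 0 \<le> l j \<and> 0 \<le> r j"
    and key: "\<And>j. j < k \<Longrightarrow> Lf j + Rf (j+1) = c" and keyk: "Lf k = c"
    and eps: "0 \<le> \<epsilon>" "\<epsilon> \<le> 1"
    and A_def: "A = (\<lambda>i. 2*i) ` {1..k}" and B_def: "B = (\<lambda>i. 2*i+1) ` {1..k}"
    and lam_def: "lam = (\<lambda>S. if S = {1} then \<epsilon> else if S = A \<or> S = B then (1-\<epsilon>)/2 else 0)"
  shows "schedule n lam \<and> min (\<epsilon>*L) ((1-\<epsilon>)*c) \<le> cutValue n l r lam"
proof -
  have A_sub: "A \<subseteq> {1..n}" using hn A_def by auto
  have B_sub: "B \<subseteq> {1..n}" using hn B_def by auto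
  have inA: "x \<in> A \<longleftrightarrow> (\<exists>i\<in>{1..k}. x = 2*i)" for x using A_def by auto
  have inB: "x \<in> B \<longleftrightarrow> (\<exists>i\<in>{1..k}. x = 2*i+1)" for x using B_def by auto
  have 1: "1 \<notin> A" "1 \<notin> B" using inA inB by auto
  have oddA: "2*i+1 \<notin> A" for i using inA by (auto, presburger)
  have evB: "2*i \<notin> B" for i using inB by (auto, presburger)
  have "2 \<in> A" using inA hk by auto
  moreover have "2 \<notin> B" using inB by auto
  ultimately have AB: "A \<noteq> B" by auto
  have A1: "A \<noteq> {1}" using \<open>2 \<in> A\<close> by auto
  have "3 \<in> B" using inB hk by force
  hence B1: "B \<noteq> {1}" by auto
  define T where "T = {{1}, A, B}"
  have Tsub: "T \<subseteq> Pow {1..n}" using A_sub B_sub hn T_def by auto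
  have lam0: "\<forall>S\<in>Pow {1..n} - T. lam S = 0" using lam_def T_def by auto
  have sumT: "(\<Sum>S\<in>Pow {1..n}. f S) = (\<Sum>S\<in>T. f S)" if "\<forall>S\<in>Pow {1..n} - T. f S = 0" for f :: "nat set \<Rightarrow> real"
    by (rule sum.mono_neutral_right) (use Tsub that in auto)
  have sched: "schedule n lam"
  proof -
    have "(\<Sum>S\<in>Pow {1..n}. lam S) = (\<Sum>S\<in>T. lam S)" by (rule sumT) (use lam0 in auto)
    also have "\<dots> = 1" using AB A1 B1 unfolding T_def lam_def by simp
    finally show ?thesis unfolding schedule_def lam_def using eps by auto
  qed
  define v where "v \<Omega> S = maxOn l (({1..n} - S) \<inter> ({1..n} - \<Omega>)) + maxOn r (S \<inter> \<Omega>)" for \<Omega> S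
  have vnn: "0 \<le> v \<Omega> S" if "S \<subseteq> {1..n}" for \<Omega> S
    unfolding v_def using that pos by (intro add_nonneg_nonneg maxOn_nonneg) (auto intro: finite_subset[OF _ finite_atLeastAtMost])
  have "min (\<epsilon>*L) ((1-\<epsilon>)*c) \<le> (\<Sum>S\<in>Pow {1..n}. lam S * v \<Omega> S)" if \<Omega>: "\<Omega> \<subseteq> {1..n}" for \<Omega>
  proof -
    have "(\<Sum>S\<in>Pow {1..n}. lam S * v \<Omega> S) = (\<Sum>S\<in>T. lam S * v \<Omega> S)" by (rule sumT) (use lam0 in auto)
    also have "\<dots> = \<epsilon> * v \<Omega> {1} + (1-\<epsilon>)/2 * v \<Omega> A + (1-\<epsilon>)/2 * v \<Omega> B"
      using AB A1 B1 unfolding T_def lam_def by simp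
    finally have eq: "(\<Sum>S\<in>Pow {1..n}. lam S * v \<Omega> S) = \<epsilon> * v \<Omega> {1} + (1-\<epsilon>)/2 * v \<Omega> A + (1-\<epsilon>)/2 * v \<Omega> B" .
    have v1: "0 \<le> v \<Omega> {1}" "0 \<le> v \<Omega> A" "0 \<le> v \<Omega> B" using vnn A_sub B_sub hn by auto
    show ?thesis
    proof (cases "1 \<in> \<Omega>")
      case True
      have "L \<le> v \<Omega> {1}"
      proof -
        have "L \<le> maxOn r ({1} \<inter> \<Omega>)" using True r1 by (intro order.trans[OF _ maxOn_ge]) auto
        moreover have "0 \<le> maxOn l (({1..n} - {1}) \<inter> ({1..n} - \<Omega>))" using pos by (intro maxOn_nonneg) auto
        ultimately show ?thesis unfolding v_def by linarith
      qed
      hence "\<epsilon>*L \<le> \<epsilon> * v \<Omega> {1}" using eps by (simp add: mult_left_mono)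
      moreover have "0 \<le> (1-\<epsilon>)/2 * v \<Omega> A" "0 \<le> (1-\<epsilon>)/2 * v \<Omega> B" using v1 eps by auto
      ultimately show ?thesis unfolding eq by linarith
    next
      case False
      define J where "J = {x\<in>{0..k}. x = 0 \<or> 2*x+1 \<notin> \<Omega>}"
      define J' where "J' = {x\<in>{0..k}. x = 0 \<or> 2*x \<notin> \<Omega>}"
      define j where "j = Max J"
      define j' where "j' = Max J'"
      have fJ: "finite J" "J \<noteq> {}" "finite J'" "J' \<noteq> {}" unfolding J_def J'_def by auto
      have jJ: "j \<in> J" "j' \<in> J'" using fJ j_def j'_def Max_in by auto
      have jk: "j \<le> k" "j' \<le> k" using jJ J_def J'_def by auto
      have jsucc: "2*(j+1)+1 \<in> \<Omega>" if "j < k"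
      proof (rule ccontr)
        assume "2*(j+1)+1 \<notin> \<Omega>"
        hence "j+1 \<in> J" using that J_def by auto
        hence "j+1 \<le> j" using fJ j_def by auto
        thus False by auto
      qed
      have j'succ: "2*(j'+1) \<in> \<Omega>" if "j' < k"
      proof (rule ccontr)
        assume "2*(j'+1) \<notin> \<Omega>"
        hence "j'+1 \<in> J'" using that J'_def by auto
        hence "j'+1 \<le> j'" using fJ j'_def by auto
        thus False by auto
      qed
      have vA: "Lf j + (if j' < k then Rf (j'+1) else 0) \<le> v \<Omega> A"
      proof -
        define w where "w = (if j = 0 then 1 else 2*j+1)"
        have w: "w \<in> ({1..n} - A) \<inter> ({1..n} - \<Omega>)" "l w = Lf j"
        proof -
          show "w \<in> ({1..n} - A) \<inter> ({1..n} - \<Omega>)"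
            using False jJ jk hn 1 oddA unfolding w_def J_def by auto
          show "l w = Lf j" using l1 lr[of j] jk unfolding w_def by auto
        qed
        have a: "Lf j \<le> maxOn l (({1..n} - A) \<inter> ({1..n} - \<Omega>))"
          using w by (metis finite_Diff finite_Int finite_atLeastAtMost maxOn_ge)
        have b: "(if j' < k then Rf (j'+1) else 0) \<le> maxOn r (A \<inter> \<Omega>)"
        proof (cases "j' < k")
          case True
          have "2*(j'+1) \<in> A" using True unfolding A_def by (intro imageI) auto
          hence "2*(j'+1) \<in> A \<inter> \<Omega>" using True j'succ by auto
          moreover have "r (2*(j'+1)) = Rf (j'+1)" using lr[of "j'+1"] True by auto
          ultimately show ?thesis using True A_sub
            by (metis finite_Int finite_atLeastAtMost finite_subset maxOn_ge)
        next
          case False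
          thus ?thesis using pos A_sub by (auto intro!: maxOn_nonneg finite_subset[OF _ finite_atLeastAtMost])
        qed
        show ?thesis using a b unfolding v_def by linarith
      qed
      have vB: "Lf j' + (if j < k then Rf (j+1) else 0) \<le> v \<Omega> B"
      proof -
        define w where "w = (if j' = 0 then 1 else 2*j')"
        have w: "w \<in> ({1..n} - B) \<inter> ({1..n} - \<Omega>)" "l w = Lf j'"
        proof -
          show "w \<in> ({1..n} - B) \<inter> ({1..n} - \<Omega>)"
            using False jJ jk hn 1 evB unfolding w_def J'_def by auto
          show "l w = Lf j'" using l1 lr[of j'] jk unfolding w_def by auto
        qed
        have a: "Lf j' \<le> maxOn l (({1..n} - B) \<inter> ({1..n} - \<Omega>))"
          using w by (metis finite_Diff finite_Int finite_atLeastAtMost maxOn_ge)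
        have b: "(if j < k then Rf (j+1) else 0) \<le> maxOn r (B \<inter> \<Omega>)"
        proof (cases "j < k")
          case True
          have "2*(j+1)+1 \<in> B" using True unfolding B_def by (intro imageI) auto
          hence "2*(j+1)+1 \<in> B \<inter> \<Omega>" using True jsucc by auto
          moreover have "r (2*(j+1)+1) = Rf (j+1)" using lr[of "j+1"] True by auto
          ultimately show ?thesis using True B_sub
            by (metis finite_Int finite_atLeastAtMost finite_subset maxOn_ge)
        next
          case False
          thus ?thesis using pos B_sub by (auto intro!: maxOn_nonneg finite_subset[OF _ finite_atLeastAtMost])
        qed
        show ?thesis using a b unfolding v_def by linarith
      qed
      have "2*c \<le> v \<Omega> A + v \<Omega> B"
      proof -
        have "2*c \<le> Lf j + (if j' < k then Rf (j'+1) else 0) + (Lf j' + (if j < k then Rf (j+1) else 0))"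
          using key[of j] key[of j'] keyk jk by (cases "j < k"; cases "j' < k") auto
        thus ?thesis using vA vB by linarith
      qed
      hence "(1-\<epsilon>)/2*(2*c) \<le> (1-\<epsilon>)/2*(v \<Omega> A + v \<Omega> B)"
        by (rule mult_left_mono) (use eps in auto)
      moreover have "(1-\<epsilon>)/2*(2*c) = (1-\<epsilon>)*c" by simp
      moreover have "(1-\<epsilon>)/2*(v \<Omega> A + v \<Omega> B) = (1-\<epsilon>)/2 * v \<Omega> A + (1-\<epsilon>)/2 * v \<Omega> B"
        by (simp add: distrib_left)
      ultimately have "(1-\<epsilon>)*c \<le> (1-\<epsilon>)/2 * v \<Omega> A + (1-\<epsilon>)/2 * v \<Omega> B" by simp
      moreover have "0 \<le> \<epsilon> * v \<Omega> {1}" using v1 eps by auto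
      ultimately show ?thesis unfolding eq by linarith
    qed
  qed
  hence "min (\<epsilon>*L) ((1-\<epsilon>)*c) \<le> cutValue n l r lam"
    by (intro cutValue_ge) (simp add: v_def)
  with sched show ?thesis by auto
qed



theorem mainTheorem8:
  fixes n k :: nat and \<theta> :: real and l :: "nat \<Rightarrow> real" and r :: "real \<Rightarrow> nat \<Rightarrow> real"
  assumes hn: "n = 2 * k + 1" and hk: "k \<ge> 1"
    and h\<theta>: "\<theta> = 2 * pi / (real n + 2)"
    and hl1: "l 1 = 1"
    and hr1: "\<And>L. L > 0 \<Longrightarrow> r L 1 = L"
    and hl: "\<And>i. i \<in> {1..k} \<Longrightarrow>
        l (2*i) = (sin (i*\<theta>) + sin ((i+1)*\<theta>)) / sin ((i+1)*\<theta>) \<and>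
        l (2*i+1) = (sin (i*\<theta>) + sin ((i+1)*\<theta>)) / sin ((i+1)*\<theta>)"
    and hr: "\<And>L i. L > 0 \<Longrightarrow> i \<in> {1..k} \<Longrightarrow>
        r L (2*i) = (sin (i*\<theta>) + sin ((i+1)*\<theta>)) / sin (i*\<theta>) \<and>
        r L (2*i+1) = (sin (i*\<theta>) + sin ((i+1)*\<theta>)) / sin (i*\<theta>)"
  shows "(\<forall>L>0. \<forall>j\<in>{2..n}. cap1Link (l j) (r L j) = 1)
       \<and> (\<forall>L>0. cap1 n l (r L) = 1)
       \<and> l n = 2 + 2 * cos \<theta>
       \<and> (\<forall>L>0. capN n l (r L) \<le> l n)
       \<and> ((\<lambda>L. capN n l (r L)) \<longlongrightarrow> 2 + 2 * cos \<theta>) at_top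
       \<and> ((\<lambda>L. cap1 n l (r L) / capN n l (r L)) \<longlongrightarrow> 1 / (2 + 2 * cos (2 * pi / (real n + 2)))) at_top"
proof -
  define s where "s x = sin (real x * \<theta>)" for x :: nat
  define c where "c = 2 + 2 * cos \<theta>"
  define Lf where "Lf x = (s x + s (x+1)) / s (x+1)" for x
  define Rf where "Rf x = (s x + s (x+1)) / s x" for x
  have th: "\<theta> = 2 * pi / (2 * real k + 3)" using h\<theta> hn by simp
  have thpos: "\<theta> > 0" using th by simp
  have spos: "s x > 0" if "1 \<le> x" "x \<le> k+1" for x
  proof -
    have "real x * \<theta> = pi * (2 * real x / (2 * real k + 3))" using th by simp
    moreover have "2 * real x / (2 * real k + 3) < 1" using that by (simp add: field_simps)
    ultimately have "real x * \<theta> < pi" by (metis mult.right_neutral mult_strict_left_mono pi_gt_zero)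
    moreover have "real x * \<theta> > 0" using that thpos by simp
    ultimately show ?thesis unfolding s_def by (rule sin_gt_zero[rotated])
  qed
  have s0: "s 0 = 0" unfolding s_def by simp
  have rec: "s j + s (j+2) = 2 * cos \<theta> * s (j+1)" for j
  proof -
    have "s j = sin (real (j+1) * \<theta> - \<theta>)" unfolding s_def by (simp add: algebra_simps)
    moreover have "s (j+2) = sin (real (j+1) * \<theta> + \<theta>)" unfolding s_def by (simp add: algebra_simps)
    moreover have "sin (x - \<theta>) + sin (x + \<theta>) = 2 * cos \<theta> * sin x" for x
      by (simp add: sin_diff sin_add algebra_simps)
    moreover have "s (j+1) = sin (real (j+1) * \<theta>)" unfolding s_def ..
    ultimately show ?thesis by simp
  qed
  have skk: "s (k+2) = - s (k+1)"
  proof -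
    have "real (k+2) * \<theta> = 2 * pi - real (k+1) * \<theta>" using th by (simp add: field_simps)
    thus ?thesis unfolding s_def by (simp add: sin_diff)
  qed
  have key: "Lf j + Rf (j+1) = c" if "j < k" for j
  proof -
    have p: "s (j+1) > 0" using spos[of "j+1"] that by simp
    have "Lf j + Rf (j+1) = (s j + s (j+2) + 2 * s (j+1)) / s (j+1)"
      unfolding Lf_def Rf_def using p by (simp add: field_simps)
    also have "\<dots> = c" unfolding c_def rec using p by (simp add: field_simps)
    finally show ?thesis .
  qed
  have keyk: "Lf k = c"
  proof -
    have p: "s (k+1) > 0" using spos[of "k+1"] by simp
    have "s k = (2 * cos \<theta> + 1) * s (k+1)" using rec[of k] skk by (simp add: algebra_simps)
    thus ?thesis unfolding Lf_def c_def using p by (simp add: field_simps)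
  qed
  have Lfpos: "Lf x > 0" if "x \<le> k" for x
    unfolding Lf_def using spos[of x] spos[of "x+1"] that s0 by (cases "x = 0") auto
  have Rfpos: "Rf x > 0" if "1 \<le> x" "x \<le> k" for x
    unfolding Rf_def using spos[of x] spos[of "x+1"] that by auto
  have Lf0: "Lf 0 = 1" unfolding Lf_def using s0 spos[of 1] by simp
  have cpos: "c > 0" using keyk Lfpos[of k] by simp
  have lLf: "l (2*i) = Lf i \<and> l (2*i+1) = Lf i" if "i \<in> {1..k}" for i
    using hl[OF that] unfolding Lf_def s_def by (simp add: add.commute)
  have rRf: "r L (2*i) = Rf i \<and> r L (2*i+1) = Rf i" if "L > 0" "i \<in> {1..k}" for i L
    using hr[OF that] unfolding Rf_def s_def by (simp add: add.commute)
  have nodes: "j = 1 \<or> (\<exists>i\<in>{1..k}. j = 2*i \<or> j = 2*i+1)" if "j \<in> {1..n}" for j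
  proof (cases "j = 1")
    case False
    then have "j div 2 \<in> {1..k}" "j = 2*(j div 2) \<or> j = 2*(j div 2)+1" using that hn by auto
    then show ?thesis by blast
  qed simp
  have nodes2: "\<exists>i\<in>{1..k}. j = 2*i \<or> j = 2*i+1" if "j \<in> {2..n}" for j
    using nodes[of j] that by auto
  have pos: "0 \<le> l j \<and> 0 \<le> r L j" if "L > 0" "j \<in> {1..n}" for j L
    using nodes[OF that(2)] proof
    assume "j = 1" thus ?thesis using hl1 hr1 that by auto
  next
    assume "\<exists>i\<in>{1..k}. j = 2*i \<or> j = 2*i+1"
    then obtain i where "i \<in> {1..k}" "j = 2*i \<or> j = 2*i+1" by blast
    thus ?thesis using lLf rRf Lfpos[of i] Rfpos[of i] that by auto
  qed
  have lle: "l j \<le> c" if "j \<in> {1..n}" for j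
    using nodes[OF that] proof
    assume "j = 1" thus ?thesis using hl1 Lf0 key[of 0] Rfpos[of 1] hk by auto
  next
    assume "\<exists>i\<in>{1..k}. j = 2*i \<or> j = 2*i+1"
    then obtain i where i: "i \<in> {1..k}" "j = 2*i \<or> j = 2*i+1" by blast
    have "Lf i \<le> c"
    proof (cases "i < k")
      case True thus ?thesis using key[of i] Rfpos[of "i+1"] by auto
    qed (use keyk i in auto)
    thus ?thesis using lLf i by auto
  qed
  have part1: "\<forall>L>0. \<forall>j\<in>{2..n}. cap1Link (l j) (r L j) = 1"
  proof (intro allI impI ballI)
    fix L j assume L: "L > (0::real)" and j: "j \<in> {2..n}"
    obtain i where i: "i \<in> {1..k}" "j = 2*i \<or> j = 2*i+1" using nodes2[OF j] by blast
    have g: "(p+q)/q*((p+q)/p)/((p+q)/q+(p+q)/p) = 1" if "p > 0" "q > 0" for p q :: real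
    proof -
      have "(p+q)/q+(p+q)/p = (p+q)*(p+q)/(p*q)" using that by (simp add: field_simps)
      moreover have "(p+q)/q*((p+q)/p) = (p+q)*(p+q)/(p*q)" by simp
      moreover have "(p+q)*(p+q)/(p*q) > 0" using that by simp
      ultimately show ?thesis by (metis div_self less_irrefl)
    qed
    have "cap1Link (Lf i) (Rf i) = 1"
      using g[of "s i" "s (i+1)"] spos[of i] spos[of "i+1"] i(1) unfolding cap1Link_def Lf_def Rf_def
      by (auto simp: add.commute)
    thus "cap1Link (l j) (r L j) = 1" using lLf[OF i(1)] rRf[OF L i(1)] i(2) by auto
  qed
  have part2: "\<forall>L>0. cap1 n l (r L) = 1"
  proof (intro allI impI)
    fix L :: real assume L: "L > 0"
    show "cap1 n l (r L) = 1" unfolding cap1_def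
    proof (rule Max_eqI)
      show "finite ((\<lambda>i. cap1Link (l i) (r L i)) ` {1..n})" by simp
      show "1 \<in> (\<lambda>i. cap1Link (l i) (r L i)) ` {1..n}"
        using part1 L hn hk by (intro image_eqI[where x=2]) auto
      fix y assume "y \<in> (\<lambda>i. cap1Link (l i) (r L i)) ` {1..n}"
      then obtain j where j: "j \<in> {1..n}" "y = cap1Link (l j) (r L j)" by auto
      show "y \<le> 1"
      proof (cases "j = 1")
        case True thus ?thesis using j hl1 hr1[OF L] L unfolding cap1Link_def by simp
      next
        case False thus ?thesis using j part1 L by auto
      qed
    qed
  qed
  have part3: "l n = c" using lLf[of k] hn hk keyk by auto
  define A where "A = (\<lambda>i::nat. 2*i) ` {1..k}"
  define B where "B = (\<lambda>i::nat. 2*i+1) ` {1..k}"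
  define lamf where "lamf \<epsilon> = (\<lambda>S. if S = {1} then \<epsilon> else if S = A \<or> S = B then (1-\<epsilon>)/2 else (0::real))" for \<epsilon>
  have LB: "schedule n (lamf \<epsilon>) \<and> min (\<epsilon>*L) ((1-\<epsilon>)*c) \<le> cutValue n l (r L) (lamf \<epsilon>)"
    if "L > 0" "0 \<le> \<epsilon>" "\<epsilon> \<le> 1" for L \<epsilon>
    by (rule lower_bound[where n=n and k=k and l=l and r="r L" and Lf=Lf and Rf=Rf and c=c
          and L=L and \<epsilon>=\<epsilon> and A=A and B=B and lam="lamf \<epsilon>"])
       (use hn hk Lf0 hl1 hr1[OF that(1)] lLf rRf[OF that(1)] pos[OF that(1)] key keyk that A_def B_def lamf_def[of \<epsilon>] in auto)
  have UB: "cutValue n l (r L) lam \<le> c" if "schedule n lam" for L lam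
    by (rule cutValue_le[OF that]) (use lle cpos in auto)
  have capUB: "capN n l (r L) \<le> c" if "L > 0" for L
    unfolding capN_def
  proof (rule cSUP_least)
    show "{lam. schedule n lam} \<noteq> {}" using LB[OF that, of "1/2"] by auto
  qed (use UB in auto)
  have capLB: "(1 - c/L)*c \<le> capN n l (r L)" if "L \<ge> c" for L
  proof -
    have L: "L > 0" using that cpos by simp
    have e: "0 \<le> c/L" "c/L \<le> 1" using that cpos L by auto
    have "(1 - c/L)*c \<le> min (c/L*L) ((1-c/L)*c)"
      using L e cpos by (auto simp: mult_le_cancel_right2)
    also have "\<dots> \<le> cutValue n l (r L) (lamf (c/L))" using LB[OF L e] by auto
    also have "\<dots> \<le> capN n l (r L)" unfolding capN_def
    proof (rule cSUP_upper)
      show "lamf (c/L) \<in> {lam. schedule n lam}" using LB[OF L e] by auto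
      show "bdd_above (cutValue n l (r L) ` {lam. schedule n lam})"
        by (rule bdd_aboveI2[where M=c]) (use UB in auto)
    qed
    finally show ?thesis .
  qed
  have part5: "((\<lambda>L. capN n l (r L)) \<longlongrightarrow> c) at_top"
  proof (rule tendsto_sandwich)
    show "\<forall>\<^sub>F L in at_top. (1 - c/L)*c \<le> capN n l (r L)"
      using eventually_ge_at_top[of c] by eventually_elim (use capLB in auto)
    show "\<forall>\<^sub>F L in at_top. capN n l (r L) \<le> c"
      using eventually_gt_at_top[of 0] by eventually_elim (use capUB in auto)
    have "((\<lambda>L::real. (1 - c/L)*c) \<longlongrightarrow> (1 - 0)*c) at_top"
      by (intro tendsto_intros tendsto_divide_0[OF tendsto_const] filterlim_mono[OF filterlim_ident at_top_le_at_infinity order_refl])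
    thus "((\<lambda>L::real. (1 - c/L)*c) \<longlongrightarrow> c) at_top" by simp
  qed simp
  have part6: "((\<lambda>L. cap1 n l (r L) / capN n l (r L)) \<longlongrightarrow> 1 / c) at_top"
  proof -
    have "((\<lambda>L. 1 / capN n l (r L)) \<longlongrightarrow> 1 / c) at_top"
      using part5 cpos by (intro tendsto_intros) auto
    moreover have "\<forall>\<^sub>F L in at_top. 1 / capN n l (r L) = cap1 n l (r L) / capN n l (r L)"
      using eventually_gt_at_top[of 0] by eventually_elim (use part2 in auto)
    ultimately show ?thesis by (rule Lim_transform_eventually)
  qed
  show ?thesis using part1 part2 part3 capUB part5 part6 h\<theta> unfolding c_def by auto
qed

end
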